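(* Let $n\in\mathbb{N}$ and positive integers $a_1\ge a_2\ge\dots\ge a_n$, $b$, $c$ with $c>b>a_n$, and consider the words $u=a_1a_2\cdots a_nb$ and $v=a_1a_2\cdots a_nbc$ (which are column words with segments $a_1\cdots a_n\,|\,b$ and $a_1\cdots a_n\,|\,b\,|\,c$). Let $t=\min\{j: b>a_j\}$ and $b'=a_t$. Then: 1. $u$ is twisted Knuth equivalent to a word $b'a'_1\cdots a'_n$ with $b'<a'_1$ and $a'_1\ge a'_2\ge\dots\ge a'_n$; 2. $v$ is twisted Knuth equivalent to a word $b'c'a''_1a''_2\cdots a''_n$ with $b'<c'<a''_1$ and $a''_1\ge a''_2\ge\dots\ge a''_n$.
   Context: A word is a finite sequence of positive integers. Twisted Knuth equivalence $\sim^*$ is the equivalence relation on words generated by: $u\,b\,a\,c\,v\sim^* u\,b\,c\,a\,v$ whenever $c\le b<a$, and $u\,a\,c\,b\,v\sim^* u\,c\,a\,b\,v$ whenever $c<b\le a$, where $a,b,c$ are positive integers and $u,v$ are arbitrary (possibly empty) words. A column word is a word $a_{11}\cdots a_{1c_1}\,a_{21}\cdots a_{2c_2}\cdots a_{k1}\cdots a_{kc_k}$ with $c_1\ge c_2\ge\dots\ge c_k>0$ such that each segment is weakly decreasing ($a_{ij}\ge a_{i,j+1}$) and $a_{i+1,c_{i+1}-j}>a_{i,c_i-j}$ for all $0\le j<c_{i+1}$, $1\le i<k$. *)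

theory Defs
  imports Main
begin

text \<open>Words are lists of natural numbers; positivity of letters is imposed
  as a hypothesis where needed.\<close>

inductive twisted_knuth_step :: "nat list \<Rightarrow> nat list \<Rightarrow> bool" where
  tk1: "c \<le> b \<Longrightarrow> b < a \<Longrightarrow>
        twisted_knuth_step (u @ [b, a, c] @ v) (u @ [b, c, a] @ v)"
| tk2: "c < b \<Longrightarrow> b \<le> a \<Longrightarrow>
        twisted_knuth_step (u @ [a, c, b] @ v) (u @ [c, a, b] @ v)"

definition twisted_knuth_equiv :: "nat list \<Rightarrow> nat list \<Rightarrow> bool" where
  "twisted_knuth_equiv = equivclp twisted_knuth_step"

end

theory Submission
  imports Defs
begin

lemma tk_trans: "twisted_knuth_equiv x y \<Longrightarrow> twisted_knuth_equiv y z \<Longrightarrow> twisted_knuth_equiv x z"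
  unfolding twisted_knuth_equiv_def by (rule equivclp_trans)

lemma tk_refl: "twisted_knuth_equiv x x"
  unfolding twisted_knuth_equiv_def by simp

lemma tk1e: "c \<le> x \<Longrightarrow> x < a \<Longrightarrow>
   twisted_knuth_equiv (u @ [x, c, a] @ v) (u @ [x, a, c] @ v)"
  unfolding twisted_knuth_equiv_def
  by (rule equivclp_sym, rule r_into_equivclp, rule tk1)

lemma tk2e: "c < x \<Longrightarrow> x \<le> a \<Longrightarrow>
   twisted_knuth_equiv (u @ [a, c, x] @ v) (u @ [c, a, x] @ v)"
  unfolding twisted_knuth_equiv_def
  by (rule r_into_equivclp, rule tk2)

lemma stepA:
  "p < b \<Longrightarrow> sorted_wrt (\<ge>) (p # ys) \<Longrightarrow>
   twisted_knuth_equiv (pre @ p # ys @ [b] @ suf) (pre @ [p, b] @ ys @ suf)"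
proof (induction ys arbitrary: pre p)
  case Nil
  then show ?case by (simp add: tk_refl)
next
  case (Cons y ys)
  have yp: "y \<le> p" using Cons.prems by simp
  have "twisted_knuth_equiv ((pre @ [p]) @ y # ys @ [b] @ suf) ((pre @ [p]) @ [y, b] @ ys @ suf)"
    using Cons.prems yp by (intro Cons.IH) auto
  moreover have "twisted_knuth_equiv (pre @ [p, y, b] @ (ys @ suf)) (pre @ [p, b, y] @ (ys @ suf))"
    using yp Cons.prems by (intro tk1e) auto
  ultimately show ?case by (auto intro: tk_trans)
qed

lemma stepB:
  "q < z \<Longrightarrow> sorted_wrt (\<ge>) xs \<Longrightarrow> \<forall>x\<in>set xs. z \<le> x \<Longrightarrow>
   twisted_knuth_equiv (pre @ xs @ [q, z] @ suf) (pre @ [q] @ xs @ [z] @ suf)"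
proof (induction xs arbitrary: pre)
  case Nil
  then show ?case by (simp add: tk_refl)
next
  case (Cons x xs)
  have 1: "twisted_knuth_equiv ((pre @ [x]) @ xs @ [q, z] @ suf) ((pre @ [x]) @ [q] @ xs @ [z] @ suf)"
    using Cons.prems by (intro Cons.IH) auto
  obtain w rest where wr: "xs @ [z] @ suf = w # rest" and w: "q < w" "w \<le> x"
  proof (cases xs)
    case Nil
    then show ?thesis using that Cons.prems by auto
  next
    case (Cons y ys)
    then show ?thesis using that Cons.prems \<open>xs = y # ys\<close> by auto
  qed
  have 2: "twisted_knuth_equiv (pre @ [x, q, w] @ rest) (pre @ [q, x, w] @ rest)"
    using w by (intro tk2e) auto
  show ?case using 1 2 wr by (auto intro: tk_trans)
qed

lemma mainA:
  fixes as :: "nat list"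
  assumes s: "sorted_wrt (\<ge>) as" and t: "t < length as" and tb: "as ! t < b"
    and lt: "\<forall>j<t. b \<le> as ! j"
  shows "twisted_knuth_equiv (pre @ as @ [b] @ suf) (pre @ (as ! t) # as[t := b] @ suf)"
proof -
  define xs where "xs = take t as"
  define ys where "ys = drop (Suc t) as"
  define p where "p = as ! t"
  have dec: "as = xs @ [p] @ ys" unfolding xs_def ys_def p_def using t
    by (simp add: id_take_nth_drop)
  have upd: "as[t := b] = xs @ b # ys" unfolding xs_def ys_def using t
    by (simp add: upd_conv_take_nth_drop)
  have sx: "sorted_wrt (\<ge>) xs" and sp: "sorted_wrt (\<ge>) (p # ys)"
    using s unfolding dec by (auto simp: sorted_wrt_append)
  have xb: "\<forall>x\<in>set xs. b \<le> x" unfolding xs_def using lt t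
    by (auto simp: in_set_conv_nth)
  have A: "twisted_knuth_equiv ((pre @ xs) @ p # ys @ [b] @ suf) ((pre @ xs) @ [p, b] @ ys @ suf)"
    using tb sp p_def by (intro stepA) auto
  have B: "twisted_knuth_equiv (pre @ xs @ [p, b] @ (ys @ suf)) (pre @ [p] @ xs @ [b] @ (ys @ suf))"
    using tb sx xb p_def by (intro stepB) auto
  have eq: "pre @ as @ [b] @ suf = pre @ xs @ p # ys @ b # suf" by (subst dec) simp
  have eq2: "pre @ (as!t) # as[t:=b] @ suf = pre @ p # xs @ b # ys @ suf" using upd p_def by simp
  show ?thesis using A B unfolding eq eq2 by (auto intro: tk_trans)
qed

lemma sorted_upd:
  fixes as :: "nat list"
  assumes s: "sorted_wrt (\<ge>) as" and t: "t < length as" and tb: "as ! t < b"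
    and lt: "\<forall>j<t. b \<le> as ! j"
  shows "sorted_wrt (\<ge>) (as[t := b])"
proof -
  define xs where "xs = take t as"
  define ys where "ys = drop (Suc t) as"
  define p where "p = as ! t"
  have dec: "as = xs @ [p] @ ys" unfolding xs_def ys_def p_def using t
    by (simp add: id_take_nth_drop)
  have upd: "as[t := b] = xs @ b # ys" unfolding xs_def ys_def using t
    by (simp add: upd_conv_take_nth_drop)
  have xb: "\<forall>x\<in>set xs. b \<le> x" unfolding xs_def using lt t
    by (auto simp: in_set_conv_nth)
  have s': "sorted_wrt (\<ge>) (xs @ [p] @ ys)" using s dec by simp
  have pb: "p < b" using tb p_def by simp
  have sx: "sorted_wrt (\<ge>) xs" and sy: "sorted_wrt (\<ge>) ys" and yp: "\<forall>y\<in>set ys. y \<le> p"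
    using s' by (auto simp: sorted_wrt_append)
  have yb: "\<forall>y\<in>set ys. y \<le> b" using yp pb by fastforce
  have "\<forall>x\<in>set xs. \<forall>y\<in>set (b # ys). y \<le> x" using xb yb by fastforce
  then show ?thesis using sx sy yb unfolding upd
    by (simp add: sorted_wrt_append)
qed

lemma hd_upd:
  fixes as :: "nat list"
  assumes t: "t < length as" and tb: "as ! t < b" and lt: "\<forall>j<t. b \<le> as ! j"
  shows "as ! t < hd (as[t := b])"
proof (cases t)
  case 0
  then show ?thesis using t tb by (cases as) auto
next
  case (Suc k)
  then have "hd (as[t := b]) = as ! 0" using t by (cases as) auto
  moreover have "b \<le> as ! 0" using lt Suc by blast
  ultimately show ?thesis using tb by simp
qed

lemma least_props:
  fixes as :: "nat list"
  assumes "as \<noteq> []" "last as < b"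
  defines "t \<equiv> LEAST j. j < length as \<and> as ! j < b"
  shows "t < length as \<and> as ! t < b \<and> (\<forall>j<t. b \<le> as ! j)"
proof -
  have ex: "length as - 1 < length as \<and> as ! (length as - 1) < b"
    using assms by (simp add: last_conv_nth)
  have 1: "t < length as \<and> as ! t < b" unfolding t_def by (rule LeastI, rule ex)
  have "\<forall>j<t. b \<le> as ! j"
  proof (intro allI impI)
    fix j assume "j < t"
    then have "\<not> (j < length as \<and> as ! j < b)" unfolding t_def by (rule not_less_Least)
    then show "b \<le> as ! j" using \<open>j < t\<close> 1 by linarith
  qed
  then show ?thesis using 1 by blast
qed

theorem lemma4p2:
  fixes as :: "nat list" and b c :: nat
  assumes n_pos: "as \<noteq> []"
    and as_pos: "\<forall>x \<in> set as. 0 < x"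
    and as_dec: "sorted_wrt (\<ge>) as"
    and b_pos: "0 < b" and c_pos: "0 < c"
    and cb: "b < c" and ban: "last as < b"
  defines "t \<equiv> LEAST j. j < length as \<and> as ! j < b"
  defines "b' \<equiv> as ! t"
  shows "(\<exists>as'. length as' = length as \<and> sorted_wrt (\<ge>) as' \<and> b' < hd as' \<and>
            twisted_knuth_equiv (as @ [b]) (b' # as'))
       \<and> (\<exists>c' as''. length as'' = length as \<and> sorted_wrt (\<ge>) as'' \<and>
            b' < c' \<and> c' < hd as'' \<and>
            twisted_knuth_equiv (as @ [b, c]) (b' # c' # as''))"
proof -
  have tp: "t < length as" "as ! t < b" "\<forall>j<t. b \<le> as ! j"
    using least_props[OF n_pos ban] unfolding t_def by auto
  define as1 where "as1 = as[t := b]"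
  have s1: "sorted_wrt (\<ge>) as1" unfolding as1_def using sorted_upd[OF as_dec tp] .
  have h1: "b' < hd as1" unfolding as1_def b'_def using hd_upd[OF tp] .
  have e1: "twisted_knuth_equiv ([] @ as @ [b] @ suf) ([] @ b' # as1 @ suf)" for suf
    unfolding as1_def b'_def using mainA[OF as_dec tp] .
  have l1: "length as1 = length as" unfolding as1_def by simp
  have part1: "\<exists>as'. length as' = length as \<and> sorted_wrt (\<ge>) as' \<and> b' < hd as' \<and>
            twisted_knuth_equiv (as @ [b]) (b' # as')"
    using e1[of "[]"] s1 h1 l1 by auto
  have ne1: "as1 \<noteq> []" using l1 n_pos by auto
  have last1: "last as1 < c"
  proof -
    have "last as1 = as1 ! (length as - 1)" using ne1 l1 by (simp add: last_conv_nth)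
    moreover have "as1 ! (length as - 1) \<le> b"
    proof (cases "t = length as - 1")
      case True then show ?thesis unfolding as1_def using tp by simp
    next
      case False then have "as1 ! (length as - 1) = last as"
        unfolding as1_def using n_pos by (simp add: last_conv_nth)
      then show ?thesis using ban by simp
    qed
    ultimately show ?thesis using cb by simp
  qed
  define t2 where "t2 = (LEAST j. j < length as1 \<and> as1 ! j < c)"
  have tp2: "t2 < length as1" "as1 ! t2 < c" "\<forall>j<t2. c \<le> as1 ! j"
    using least_props[OF ne1 last1] unfolding t2_def by auto
  have t2t: "t2 \<le> t"
  proof (rule ccontr)
    assume "\<not> t2 \<le> t"
    then have "c \<le> as1 ! t" using tp2 by auto
    moreover have "as1 ! t = b" unfolding as1_def using tp by simp
    ultimately show False using cb by simp
  qed
  have c'b: "b \<le> as1 ! t2"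
  proof (cases "t2 = t")
    case True then show ?thesis unfolding as1_def using tp by simp
  next
    case False then have "t2 < t" using t2t by simp
    then show ?thesis unfolding as1_def using tp by simp
  qed
  define c' where "c' = as1 ! t2"
  define as2 where "as2 = as1[t2 := c]"
  have s2: "sorted_wrt (\<ge>) as2" unfolding as2_def using sorted_upd[OF s1 tp2] .
  have h2: "c' < hd as2" unfolding as2_def c'_def using hd_upd[OF tp2] .
  have e2: "twisted_knuth_equiv ([b'] @ as1 @ [c] @ []) ([b'] @ c' # as2 @ [])"
    unfolding as2_def c'_def using mainA[OF s1 tp2] .
  have "twisted_knuth_equiv (as @ [b, c]) (b' # c' # as2)"
  proof -
    have a: "twisted_knuth_equiv (as @ [b, c]) (b' # as1 @ [c])" using e1[of "[c]"] by simp
    have b: "twisted_knuth_equiv (b' # as1 @ [c]) (b' # c' # as2)" using e2 by simp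
    show ?thesis using tk_trans[OF a b] .
  qed
  moreover have "b' < c'" unfolding c'_def b'_def using c'b tp by simp
  moreover have "length as2 = length as" unfolding as2_def using l1 by simp
  ultimately show ?thesis using part1 s2 h2 by blast
qed

end
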